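(* Every countable pca $\mathcal{A}$ embeds in $\mathcal{K}_2$.
   Context: A pca is a set with a partial binary application operation containing distinct $\mathrm{s},\mathrm{k}$ with $\mathrm{k}ab\downarrow=a$, $\mathrm{s}ab\downarrow$, $\mathrm{s}abc\simeq(ac)(bc)$. An embedding of pcas is an injective map $f$ with: if $ab$ is defined then $f(a)f(b)$ is defined and equals $f(ab)$. $\mathcal{K}_2$: elements are all total functions $g:\omega\to\omega$, with $g\cdot h$ the function $n\mapsto\Phi^{g\oplus h}_{g(0)}(n)$ ($\Phi_e$ the $e$-th Turing functional, $(g\oplus h)(2n)=g(n)$, $(g\oplus h)(2n+1)=h(n)$), defined if and only if this function is total. *)

theory Defs
  imports Main "HOL-Library.Countable" "HOL-Library.Countable_Set"
begin

text \<open>A partial applicative structure on the type 'a: app a b = None means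
  "ab is undefined". Application is lifted to partial terms (options).\<close>

definition papp :: "('a \<Rightarrow> 'a \<Rightarrow> 'a option) \<Rightarrow> 'a option \<Rightarrow> 'a option \<Rightarrow> 'a option" where
  "papp app x y = (case x of None \<Rightarrow> None | Some a \<Rightarrow>
                     (case y of None \<Rightarrow> None | Some b \<Rightarrow> app a b))"

text \<open>pca with combinators s, k (Kleene equality = equality of options).\<close>
definition is_pca :: "('a \<Rightarrow> 'a \<Rightarrow> 'a option) \<Rightarrow> 'a \<Rightarrow> 'a \<Rightarrow> bool" where
  "is_pca app s k \<longleftrightarrow>
     s \<noteq> k \<and>
     (\<forall>a b. papp app (papp app (Some k) (Some a)) (Some b) = Some a) \<and>
     (\<forall>a b. papp app (papp app (Some s) (Some a)) (Some b) \<noteq> None) \<and>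
     (\<forall>a b c. papp app (papp app (papp app (Some s) (Some a)) (Some b)) (Some c)
              = papp app (papp app (Some a) (Some c)) (papp app (Some b) (Some c)))"

definition is_pca_embedding ::
  "('a \<Rightarrow> 'a \<Rightarrow> 'a option) \<Rightarrow> ('b \<Rightarrow> 'b \<Rightarrow> 'b option) \<Rightarrow> ('a \<Rightarrow> 'b) \<Rightarrow> bool" where
  "is_pca_embedding appA appB f \<longleftrightarrow>
     inj f \<and> (\<forall>a b c. appA a b = Some c \<longrightarrow> appB (f a) (f b) = Some (f c))"

datatype pcode = Zero | Succ | Proj nat | Oracle | Comp pcode "pcode list" | Prim pcode pcode | Mu pcode

instance pcode :: countable
  by countable_datatype

text \<open>Goedel numbering of codes: the e-th code is from_nat e (surjective).\<close>

fun hd0 :: "nat list \<Rightarrow> nat" where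
  "hd0 [] = 0" | "hd0 (x # _) = x"

inductive evalo :: "(nat \<Rightarrow> nat) \<Rightarrow> pcode \<Rightarrow> nat list \<Rightarrow> nat \<Rightarrow> bool" for h where
  ev_zero: "evalo h Zero xs 0"
| ev_succ: "evalo h Succ xs (Suc (hd0 xs))"
| ev_proj: "i < length xs \<Longrightarrow> evalo h (Proj i) xs (xs ! i)"
| ev_oracle: "evalo h Oracle xs (h (hd0 xs))"
| ev_comp: "list_all2 (\<lambda>g y. evalo h g xs y) gs ys \<Longrightarrow> evalo h f ys z \<Longrightarrow> evalo h (Comp f gs) xs z"
| ev_prim0: "evalo h f xs z \<Longrightarrow> evalo h (Prim f g) (0 # xs) z"
| ev_primS: "evalo h (Prim f g) (n # xs) r \<Longrightarrow> evalo h g (n # r # xs) z \<Longrightarrow>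
              evalo h (Prim f g) (Suc n # xs) z"
| ev_mu: "evalo h f (n # xs) 0 \<Longrightarrow> (\<forall>m<n. \<exists>y. y \<noteq> 0 \<and> evalo h f (m # xs) y) \<Longrightarrow>
              evalo h (Mu f) xs n"

definition phi_converges :: "nat \<Rightarrow> (nat \<Rightarrow> nat) \<Rightarrow> nat \<Rightarrow> bool" where
  "phi_converges e h n \<longleftrightarrow> (\<exists>y. evalo h (from_nat e) [n] y)"

definition phi :: "nat \<Rightarrow> (nat \<Rightarrow> nat) \<Rightarrow> nat \<Rightarrow> nat" where
  "phi e h n = (THE y. evalo h (from_nat e) [n] y)"

definition join :: "(nat \<Rightarrow> nat) \<Rightarrow> (nat \<Rightarrow> nat) \<Rightarrow> nat \<Rightarrow> nat" where
  "join g h n = (if even n then g (n div 2) else h (n div 2))"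

definition K2_app :: "(nat \<Rightarrow> nat) \<Rightarrow> (nat \<Rightarrow> nat) \<Rightarrow> (nat \<Rightarrow> nat) option" where
  "K2_app g h = (if (\<forall>n. phi_converges (g 0) (join g h) n)
                 then Some (\<lambda>n. phi (g 0) (join g h) n) else None)"

end

theory Submission
  imports Defs
begin

lemma la2_det: "list_all2 Q gs ys \<Longrightarrow> list_all2 R gs ys' \<Longrightarrow>
   (\<And>g y y'. Q g y \<Longrightarrow> R g y' \<Longrightarrow> y = y') \<Longrightarrow> ys = ys'"
proof (induction gs arbitrary: ys ys')
  case Nil then show ?case by auto
next
  case (Cons g gs) then show ?case by (auto simp: list_all2_Cons1)
qed

lemma evalo_det:
  "evalo h P xs y \<Longrightarrow> evalo h P xs y' \<Longrightarrow> y = y'"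
proof (induction arbitrary: y' rule: evalo.induct)
  case (ev_zero xs) then show ?case by (cases rule: evalo.cases) auto
next
  case (ev_succ xs) then show ?case by (cases rule: evalo.cases) auto
next
  case (ev_proj i xs) show ?case using ev_proj.prems by (cases rule: evalo.cases) auto
next
  case (ev_oracle xs) then show ?case by (cases rule: evalo.cases) auto
next
  case (ev_comp xs gs ys f z)
  from ev_comp.prems obtain ys' where a: "list_all2 (\<lambda>g y. evalo h g xs y) gs ys'"
    and b: "evalo h f ys' y'"
    by (cases rule: evalo.cases) auto
  have "ys = ys'" by (rule la2_det[OF ev_comp(1) a]) auto
  then show ?case using ev_comp.IH b by auto
next
  case (ev_prim0 f xs z g)
  from ev_prim0.prems have "evalo h f xs y'" by (cases rule: evalo.cases) auto
  then show ?case using ev_prim0.IH by auto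
next
  case (ev_primS f g n xs r z)
  from ev_primS.prems obtain r' where "evalo h (Prim f g) (n # xs) r'" "evalo h g (n # r' # xs) y'"
    by (cases rule: evalo.cases) auto
  then show ?case using ev_primS.IH by auto
next
  case (ev_mu f n xs)
  from ev_mu.prems have a: "evalo h f (y' # xs) 0" and b: "\<forall>m<y'. \<exists>y. y \<noteq> 0 \<and> evalo h f (m # xs) y"
    by (cases rule: evalo.cases; auto)+
  show ?case
  proof (rule linorder_cases[of n y'])
    assume "n < y'"
    with b obtain y where "y \<noteq> 0" "evalo h f (n # xs) y" by auto
    with ev_mu.IH(1) show ?thesis by fastforce
  next
    assume "y' < n"
    with ev_mu.IH(2) obtain y where "y \<noteq> 0" "evalo h f (y' # xs) y" "\<forall>z. evalo h f (y' # xs) z \<longrightarrow> y = z" by blast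
    with a show ?thesis by blast
  qed
qed

lemma ev_succ': "y = Suc (hd0 xs) \<Longrightarrow> evalo h Succ xs y" by (simp add: ev_succ)
lemma ev_oracle': "y = h (hd0 xs) \<Longrightarrow> evalo h Oracle xs y" by (simp add: ev_oracle)
lemma ev_proj': "i < length xs \<Longrightarrow> y = xs ! i \<Longrightarrow> evalo h (Proj i) xs y" by (simp add: ev_proj)
lemma ev_cong: "evalo h p xs y \<Longrightarrow> y = y' \<Longrightarrow> evalo h p xs y'" by simp
lemmas evi = ev_succ' ev_oracle' ev_proj' ev_zero ev_comp ev_prim0

definition Add :: pcode where "Add = Prim (Proj 0) (Comp Succ [Proj 1])"

fun C :: "nat \<Rightarrow> pcode" where
  "C 0 = Zero" | "C (Suc k) = Comp Succ [C k]"

lemma ev_C: "evalo H (C k) xs k"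
  by (induction k) (auto intro!: evi)

lemma ev_Add: "evalo H Add [x, y] (x + y)"
  unfolding Add_def
proof (induction x)
  case 0 then show ?case by (auto intro!: evi)
next
  case (Suc x)
  show ?case
    by (rule ev_primS[OF Suc]) (auto intro!: evi)
qed

definition Q :: pcode where "Q = Comp Add [Comp Oracle [C 2], Comp Oracle [C 5]]"

lemma ev_Q: "evalo H Q xs (H 2 + H 5)"
  unfolding Q_def
  by (rule ev_comp[of _ _ _ "[H 2, H 5]"]) (auto intro!: evi ev_C ev_Add)

definition N3 :: pcode where "N3 = Comp Succ [Comp Succ [Comp Succ [Proj 0]]]"

lemma ev_N3: "evalo H N3 (m # xs) (m + 3)"
  unfolding N3_def by (auto intro!: evi)

definition G3 :: pcode where "G3 = Comp Oracle [Comp Add [N3, N3]]"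
definition G2a :: pcode where "G2a = Comp Oracle [Comp Succ [Comp Succ [Q]]]"
definition G1 :: pcode where "G1 = Comp Oracle [Q]"
definition Gp :: pcode where "Gp = Prim G2a G3"
definition G :: pcode where "G = Prim G1 Gp"
definition P :: pcode where "P = Prim Oracle G"

lemma ev_G3: "evalo H G3 (m # xs) (H ((m+3) + (m+3)))"
  unfolding G3_def
  by (auto intro!: evi ev_N3 ev_Add)

lemma ev_Gp: "evalo H Gp (m # xs) (if m = 0 then H (H 2 + H 5 + 2) else H (2 * (m + 2)))"
proof (induction m)
  case 0 then show ?case unfolding Gp_def G2a_def
    by (auto intro!: evi ev_Q)
next
  case (Suc m)
  show ?case unfolding Gp_def
    apply (rule ev_primS[OF Suc[unfolded Gp_def]])
    apply (rule ev_cong[OF ev_G3])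
    apply (subgoal_tac "(m + 3) + (m + 3) = 2 * (Suc m + 2)")
     apply (simp only: if_False nat.distinct(2))
    by simp
qed

lemma ev_G: "evalo H G (m # xs) (if m = 0 then H (H 2 + H 5) else if m = 1 then H (H 2 + H 5 + 2) else H (2 * (m + 1)))"
proof (induction m)
  case 0 then show ?case unfolding G_def G1_def
    by (auto intro!: evi ev_Q)
next
  case (Suc m)
  show ?case unfolding G_def
    apply (rule ev_primS[OF Suc[unfolded G_def]])
    by (rule ev_cong[OF ev_Gp]) simp
qed

definition R :: "(nat \<Rightarrow> nat) \<Rightarrow> nat \<Rightarrow> nat" where
  "R H n = (if n = 0 then H 0 else if n = 1 then H (H 2 + H 5)
     else if n = 2 then H (H 2 + H 5 + 2) else H (2 * n))"

lemma ev_P: "evalo H P [n] (R H n)"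
proof (induction n)
  case 0 then show ?case unfolding P_def R_def
    by (auto intro!: ev_prim0 ev_oracle')
next
  case (Suc n)
  show ?case unfolding P_def
    apply (rule ev_primS[OF Suc[unfolded P_def]])
    by (rule ev_cong[OF ev_G]) (simp add: R_def)
qed

lemma phi_P: "phi_converges (to_nat P) H n \<and> phi (to_nat P) H n = R H n"
proof
  have ex: "evalo H P [n] (R H n)" by (rule ev_P)
  then show "phi_converges (to_nat P) H n" unfolding phi_converges_def by auto
  have "(THE y. evalo H P [n] y) = R H n"
    by (rule the_equality[of "\<lambda>y. evalo H P [n] y", OF ex]) (rule evalo_det[OF _ ex])
  then show "phi (to_nat P) H n = R H n" unfolding phi_def by simp
qed

lemma pow4_inj:
  "(4::nat)^x + 2 * 4^y = 4^x' + 2 * 4^y' \<Longrightarrow> x = x' \<and> y = y'"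
proof (induction x arbitrary: y x' y')
  case 0
  have "x' = 0"
  proof (rule ccontr)
    assume "x' \<noteq> 0"
    then obtain k where "x' = Suc k" by (cases x') auto
    with 0 have "1 + 2 * 4^y = 4 * 4^k + 2 * (4::nat)^y'" by simp
    then show False by presburger
  qed
  with 0 show ?case by simp
next
  case (Suc x)
  obtain k where k: "x' = Suc k"
  proof (cases x')
    case 0
    with Suc.prems have "4 * 4^x + 2 * 4^y = 1 + 2 * (4::nat)^y'" by simp
    then show ?thesis by presburger
  qed
  have e: "4 * 4^x + 2 * 4^y = 4 * 4^k + 2 * (4::nat)^y'" using Suc.prems k by simp
  show ?case
  proof (cases y)
    case 0
    have "y' = 0"
    proof (rule ccontr)
      assume "y' \<noteq> 0"
      then obtain j where "y' = Suc j" by (cases y') auto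
      with e 0 have "4 * 4^x + 2 = 4 * 4^k + 8 * (4::nat)^j" by simp
      then show False by presburger
    qed
    with e 0 k show ?thesis by simp
  next
    case (Suc j)
    obtain j' where j': "y' = Suc j'"
    proof (cases y')
      case 0
      with e Suc have "4 * 4^x + 8 * 4^j = 4 * 4^k + (2::nat)" by simp
      then show ?thesis by presburger
    qed
    from e Suc j' have "4^x + 2 * 4^j = 4^k + 2 * (4::nat)^j'" by simp
    from Suc.IH[OF this] Suc j' k show ?thesis by simp
  qed
qed

theorem corollary6p2:
  fixes app :: "'a \<Rightarrow> 'a \<Rightarrow> 'a option" and s k :: 'a
  assumes "is_pca app s k"
    and "countable (UNIV :: 'a set)"
  shows "\<exists>f :: 'a \<Rightarrow> (nat \<Rightarrow> nat). is_pca_embedding app K2_app f"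
proof -
  obtain t :: "'a \<Rightarrow> nat" where t: "inj t"
    using assms(2) unfolding countable_def by blast
  define u :: "'a \<Rightarrow> nat" where "u a = 8 * 4 ^ t a" for a
  define v :: "'a \<Rightarrow> nat" where "v a = 16 * 4 ^ t a" for a
  have uv_inj: "a = a' \<and> b = b'" if "u a + v b = u a' + v b'" for a b a' b'
  proof -
    from that have "4 ^ t a + 2 * 4 ^ t b = 4 ^ t a' + 2 * (4::nat) ^ t b'"
      unfolding u_def v_def by simp
    from pow4_inj[OF this] t show ?thesis by (auto dest: injD)
  qed
  have uv_off: "u a + v b + 2 \<noteq> u a' + v b'" for a b a' b'
    unfolding u_def v_def by presburger
  define e where "e = to_nat P"
  define D :: "nat \<Rightarrow> nat" where "D m = (if \<exists>a b c. app a b = Some c \<and> u a + v b = 2 * m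
      then u (SOME c. \<exists>a b. app a b = Some c \<and> u a + v b = 2 * m)
      else if \<exists>a b c. app a b = Some c \<and> u a + v b + 2 = 2 * m
      then v (SOME c. \<exists>a b. app a b = Some c \<and> u a + v b + 2 = 2 * m)
      else 0)" for m
  define f where "f a n = (if n = 0 then e else if n = 1 then u a else if n = 2 then v a else D n)" for a n
  have "is_pca_embedding app K2_app f"
    unfolding is_pca_embedding_def
  proof (intro conjI allI impI)
    show "inj f"
    proof (rule injI)
      fix a b assume "f a = f b"
      then have "f a 1 = f b 1" by simp
      then have "t a = t b" unfolding f_def u_def by simp
      with t show "a = b" by (auto dest: injD)
    qed
  next
    fix a b c assume abc: "app a b = Some c"
    define H where "H = join (f a) (f b)"
    have H0: "H 0 = e" unfolding H_def join_def f_def by simp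
    have H2: "H 2 = u a" unfolding H_def join_def f_def by simp
    have H5: "H 5 = v b" unfolding H_def join_def f_def by simp
    define m :: nat where "m = 4 * 4 ^ t a + 8 * 4 ^ t b"
    have qm: "u a + v b = 2 * m" unfolding m_def u_def v_def by simp
    have m3: "m \<ge> 3"
    proof -
      have "(1::nat) \<le> 4 ^ t a" by simp
      then show ?thesis unfolding m_def by linarith
    qed
    have Hq: "H (2 * m) = D m" unfolding H_def join_def f_def using m3 by simp
    have Hq2: "H (2 * m + 2) = D (m + 1)" unfolding H_def join_def f_def using m3 by simp
    have Dm: "D m = u c"
    proof -
      have ex: "\<exists>a' b' c'. app a' b' = Some c' \<and> u a' + v b' = 2 * m" using abc qm by blast
      have "\<exists>a b. app a b = Some (SOME c. \<exists>a b. app a b = Some c \<and> u a + v b = 2 * m) \<and> u a + v b = 2 * m"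
        using someI_ex[of "\<lambda>c. \<exists>a b. app a b = Some c \<and> u a + v b = 2 * m"] ex by blast
      then obtain a' b' where "app a' b' = Some (SOME c. \<exists>a b. app a b = Some c \<and> u a + v b = 2 * m)"
        "u a' + v b' = 2 * m" by blast
      with qm uv_inj[of a' b' a b] abc have "(SOME c. \<exists>a b. app a b = Some c \<and> u a + v b = 2 * m) = c"
        by auto
      with ex show ?thesis unfolding D_def by simp
    qed
    have Dm1: "D (m + 1) = v c"
    proof -
      have nex: "\<not> (\<exists>a' b' c'. app a' b' = Some c' \<and> u a' + v b' = 2 * (m + 1))"
        using qm uv_off by (metis add_mult_distrib2 mult.right_neutral)
      have ex: "\<exists>a' b' c'. app a' b' = Some c' \<and> u a' + v b' + 2 = 2 * (m + 1)" using abc qm by auto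
      have "\<exists>a b. app a b = Some (SOME c. \<exists>a b. app a b = Some c \<and> u a + v b + 2 = 2 * (m + 1)) \<and> u a + v b + 2 = 2 * (m + 1)"
        using someI_ex[of "\<lambda>c. \<exists>a b. app a b = Some c \<and> u a + v b + 2 = 2 * (m + 1)"] ex by blast
      then obtain a' b' where "app a' b' = Some (SOME c. \<exists>a b. app a b = Some c \<and> u a + v b + 2 = 2 * (m + 1))"
        "u a' + v b' + 2 = 2 * (m + 1)" by blast
      with qm uv_inj[of a' b' a b] abc have "(SOME c. \<exists>a b. app a b = Some c \<and> u a + v b + 2 = 2 * (m + 1)) = c"
        by auto
      then show ?thesis
        apply (subst D_def)
        apply (subst if_not_P[OF nex])
        apply (subst if_P[OF ex])
        by simp
    qed
    have RH: "R H n = f c n" for n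
    proof -
      consider "n = 0" | "n = 1" | "n = 2" | "n \<ge> 3" by linarith
      then show ?thesis
      proof cases
        case 1
        then have "R H n = H 0" by (simp add: R_def)
        also have "\<dots> = f c n" using H0 1 by (simp add: f_def)
        finally show ?thesis .
      next
        case 2
        then have "R H n = H (H 2 + H 5)" by (simp add: R_def)
        also have "\<dots> = H (2 * m)" using H2 H5 qm by simp
        also have "\<dots> = u c" using Hq Dm by simp
        also have "\<dots> = f c n" using 2 by (simp add: f_def)
        finally show ?thesis .
      next
        case 3
        then have "R H n = H (H 2 + H 5 + 2)" by (simp add: R_def)
        also have "\<dots> = H (2 * m + 2)" using H2 H5 qm by simp
        also have "\<dots> = v c" using Hq2 Dm1 by simp
        also have "\<dots> = f c n" using 3 by (simp add: f_def)
        finally show ?thesis .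
      next
        case 4
        then have "R H n = H (2 * n)" by (simp add: R_def)
        also have "\<dots> = f a n" unfolding H_def join_def by simp
        also have "\<dots> = D n" using 4 by (simp add: f_def)
        also have "\<dots> = f c n" using 4 by (simp add: f_def)
        finally show ?thesis .
      qed
    qed
    have fa0: "f a 0 = to_nat P" unfolding f_def e_def by simp
    have conv: "\<forall>n. phi_converges (to_nat P) H n" using phi_P by blast
    have eq: "(\<lambda>n. phi (to_nat P) H n) = f c"
    proof
      fix n show "phi (to_nat P) H n = f c n" using phi_P[of H n] RH[of n] by simp
    qed
    show "K2_app (f a) (f b) = Some (f c)"
      unfolding K2_app_def fa0 H_def[symmetric] using conv eq by simp
  qed
  then show ?thesis by blast
qed

end
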